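(* Let $\mathscr{X}$ be a totally bounded normed metric space with $\|x\|\le1$ for all $x$, consider the $\epsilon$-perturbation channel on $\mathscr{X}$ described in the context, let $0<\epsilon\le1$ and $0\le\delta<m_{\mathscr{Y}}(V_\epsilon)$. Then $$C^\delta_\epsilon=\sup\Big\{ I_{\tilde\delta/|[\![X]\!]|}(Y;X)\ :\ \tilde\delta\ge0,\ X\in\mathscr{F}_{\tilde\delta},\ \tilde\delta\le \delta/m_{\mathscr{Y}}([\![Y]\!])\Big\}\ \text{bits},$$ where for each transmitted UV $X$, $Y$ denotes the corresponding received UV.
   Context: Uncertain variables (UVs): a UV is a map $U$ from a sample space $\Omega$ to a set; jointly considered UVs share $\Omega$. $[\![U]\!]=\{U(\omega)\}$; $[\![U|w]\!]=\{U(\omega):W(\omega)=w\}$, $[\![U|W]\!]=\{[\![U|w]\!]:w\in[\![W]\!]\}$. An uncertainty function on a set $\mathscr{U}$ is a map $m$ on subsets of $\mathscr{U}$ with $m(\emptyset)=0$, $0<m(S)<\infty$ for nonempty $S$, $\max\{m(S_1),m(S_2)\}\le m(S_1\cup S_2)$. Association: with uncertainty functions $m_{\mathscr{X}},m_{\mathscr{Y}}$ on the value sets of $X,Y$, $\mathscr{A}(X;Y)=\{m_{\mathscr{X}}([\![X|y_1]\!]\cap[\![X|y_2]\!])/m_{\mathscr{X}}([\![X]\!]):y_1\ne y_2\in[\![Y]\!]\}\setminus\{0\}$, $\mathscr{A}(Y;X)=\{m_{\mathscr{Y}}([\![Y|x_1]\!]\cap[\![Y|x_2]\!])/m_{\mathscr{Y}}([\![Y]\!]):x_1\ne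 x_2\in[\![X]\!]\}\setminus\{0\}$. $\mathscr{A}\succ\delta$: all elements $>\delta$ (false for $\emptyset$); $\mathscr{A}\preceq\delta$: all elements $\le\delta$ (true for $\emptyset$). $(X,Y)\stackrel{d}{\leftrightarrow}(\delta_1,\delta_2)$ iff $\mathscr{A}(X;Y)\succ\delta_1,\mathscr{A}(Y;X)\succ\delta_2$; $(X,Y)\stackrel{a}{\leftrightarrow}(\delta_1,\delta_2)$ iff $\mathscr{A}(X;Y)\preceq\delta_1,\mathscr{A}(Y;X)\preceq\delta_2$. $\delta$-mutual information: for UVs $U$ (values in $\mathscr{U}$ with uncertainty function $m_{\mathscr{U}}$) and $W$, points $u,u'\in[\![U]\!]$ are $\delta$-connected via $[\![U|W]\!]$ if there are $w_1,\dots,w_N\in[\![W]\!]$ with $u\in[\![U|w_1]\!]$, $u'\in[\![U|w_N]\!]$, $m_{\mathscr{U}}([\![U|w_i]\!]\cap[\![U|w_{i-1}]\!])/m_{\mathscr{U}}([\![U]\!])>\delta$ for $1<i\le N$; a set is $\delta$-connected if all pairs of its points are. A $\delta$-overlap family $[\![U|W]\!]^*_\delta$ is a family of distinct subsets covering $[\![U]\!]$, of largest cardinality among covering families such that (i) each member is $\delta$-connected and contains some $[\![U|w]\!]$; (ii) distinct members $S_1,S_2$ satisfy $m_{\mathscr{U}}(S_1\cap S_2)\le\delta\, m_{\mathscr{U}}([\![U]\!])$; (iii) each $[\![U|w]\!]$ lies in some member. $I_\delta(U;W)=\log_2|[\![U|W]\!]^*_\delta|$ if such a family exists, else $0$. Channel: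 the output space is $\mathscr{Y}=\mathscr{X}$; $m_{\mathscr{X}},m_{\mathscr{Y}}$ are uncertainty functions on $\mathscr{X},\mathscr{Y}$ with $m_{\mathscr{Y}}(\mathscr{Y})=1$. $S_\epsilon(x)=\{y\in\mathscr{Y}:\|x-y\|\le\epsilon\}$; $V_\epsilon=S_\epsilon(x^* )$ where $x^*$ minimizes $m_{\mathscr{Y}}(S_\epsilon(x))$ over $x\in\mathscr{X}$. A codebook is a discrete set $\mathcal{C}\subseteq\mathscr{X}$. $e_\epsilon(x_1,x_2)=m_{\mathscr{Y}}(S_\epsilon(x_1)\cap S_\epsilon(x_2))/m_{\mathscr{Y}}(\mathscr{Y})$. $\mathcal{C}$ is $(\epsilon,\delta)$-distinguishable if $e_\epsilon(x_1,x_2)\le\delta/|\mathcal{C}|$ for all distinct $x_1,x_2\in\mathcal{C}$; $C^\delta_\epsilon=\sup\log_2|\mathcal{C}|$ over $(\epsilon,\delta)$-distinguishable codebooks. For a codebook $\mathcal{C}$, the transmitted UV $X$ and received UV $Y$ satisfy $[\![X]\!]=\mathcal{C}$, $[\![Y]\!]=\bigcup_{x\in\mathcal{C}}S_\epsilon(x)$, $[\![Y|x]\!]=\{y\in[\![Y]\!]:\|x-y\|\le\epsilon\}$, $[\![X|y]\!]=\{x\in[\![X]\!]:\|x-y\|\le\epsilon\}$. Feasible set: $\mathscr{F}_\delta$ is the set of transmitted UVs $X$ with $[\![X]\!]\subseteq\mathscr{X}$ a codebook such that either $(X,Y)\stackrel{d}{\leftrightarrow}(0,\delta/|[\![X]\!]|)$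 or $(X,Y)\stackrel{a}{\leftrightarrow}(1,\delta/|[\![X]\!]|)$. *)

theory Defs
  imports "HOL-Analysis.Analysis" "HOL-Library.Extended_Real"
begin

definition uncertainty_function :: "'b set \<Rightarrow> ('b set \<Rightarrow> real) \<Rightarrow> bool" where
  "uncertainty_function A m \<longleftrightarrow>
     m {} = 0 \<and> (\<forall>S. S \<subseteq> A \<and> S \<noteq> {} \<longrightarrow> 0 < m S) \<and>
     (\<forall>S1 S2. S1 \<subseteq> A \<and> S2 \<subseteq> A \<longrightarrow> max (m S1) (m S2) \<le> m (S1 \<union> S2))"

text \<open>Ball of radius eps in the output space Ys = Xs.\<close>
definition S_eps :: "'a::real_normed_vector set \<Rightarrow> real \<Rightarrow> 'a \<Rightarrow> 'a set" where
  "S_eps Xs eps x = {y \<in> Xs. norm (x - y) \<le> eps}"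

text \<open>Codebook: a discrete (here: finite, nonempty) subset of Xs.\<close>
definition codebook :: "'a set \<Rightarrow> 'a set \<Rightarrow> bool" where
  "codebook Xs C \<longleftrightarrow> C \<subseteq> Xs \<and> finite C \<and> C \<noteq> {}"

definition distinguishable ::
  "('a::real_normed_vector set \<Rightarrow> real) \<Rightarrow> 'a set \<Rightarrow> real \<Rightarrow> real \<Rightarrow> 'a set \<Rightarrow> bool" where
  "distinguishable mY Xs eps delta C \<longleftrightarrow> codebook Xs C \<and>
     (\<forall>x1\<in>C. \<forall>x2\<in>C. x1 \<noteq> x2 \<longrightarrow>
        mY (S_eps Xs eps x1 \<inter> S_eps Xs eps x2) / mY Xs \<le> delta / real (card C))"

definition capacity ::
  "('a::real_normed_vector set \<Rightarrow> real) \<Rightarrow> 'a set \<Rightarrow> real \<Rightarrow> real \<Rightarrow> ereal" where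
  "capacity mY Xs eps delta =
     Sup {ereal (log 2 (real (card C))) | C. distinguishable mY Xs eps delta C}"

text \<open>Ranges of transmitted/received UVs for codebook C.\<close>
definition outY :: "'a::real_normed_vector set \<Rightarrow> real \<Rightarrow> 'a set \<Rightarrow> 'a set" where
  "outY Xs eps C = (\<Union>x\<in>C. S_eps Xs eps x)"

definition condY :: "'a::real_normed_vector set \<Rightarrow> real \<Rightarrow> 'a set \<Rightarrow> 'a \<Rightarrow> 'a set" where
  "condY Xs eps C x = {y \<in> outY Xs eps C. norm (x - y) \<le> eps}"

definition condX :: "real \<Rightarrow> 'a::real_normed_vector set \<Rightarrow> 'a \<Rightarrow> 'a set" where
  "condX eps C y = {x \<in> C. norm (x - y) \<le> eps}"

definition assocXY ::
  "('a::real_normed_vector set \<Rightarrow> real) \<Rightarrow> 'a set \<Rightarrow> real \<Rightarrow> 'a set \<Rightarrow> real set" where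
  "assocXY mX Xs eps C =
     {mX (condX eps C y1 \<inter> condX eps C y2) / mX C | y1 y2.
        y1 \<in> outY Xs eps C \<and> y2 \<in> outY Xs eps C \<and> y1 \<noteq> y2} - {0}"

definition assocYX ::
  "('a::real_normed_vector set \<Rightarrow> real) \<Rightarrow> 'a set \<Rightarrow> real \<Rightarrow> 'a set \<Rightarrow> real set" where
  "assocYX mY Xs eps C =
     {mY (condY Xs eps C x1 \<inter> condY Xs eps C x2) / mY (outY Xs eps C) | x1 x2.
        x1 \<in> C \<and> x2 \<in> C \<and> x1 \<noteq> x2} - {0}"

definition succ_set :: "real set \<Rightarrow> real \<Rightarrow> bool" where
  "succ_set A d \<longleftrightarrow> A \<noteq> {} \<and> (\<forall>a\<in>A. a > d)"

definition preceq_set :: "real set \<Rightarrow> real \<Rightarrow> bool" where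
  "preceq_set A d \<longleftrightarrow> (\<forall>a\<in>A. a \<le> d)"

text \<open>Membership of the transmitted UV with range C in the feasible set F_delta.\<close>
definition feasible ::
  "('a::real_normed_vector set \<Rightarrow> real) \<Rightarrow> ('a set \<Rightarrow> real) \<Rightarrow> 'a set \<Rightarrow> real \<Rightarrow> real \<Rightarrow> 'a set \<Rightarrow> bool" where
  "feasible mX mY Xs eps delta C \<longleftrightarrow> codebook Xs C \<and>
     ((succ_set (assocXY mX Xs eps C) 0 \<and> succ_set (assocYX mY Xs eps C) (delta / real (card C))) \<or>
      (preceq_set (assocXY mX Xs eps C) 1 \<and> preceq_set (assocYX mY Xs eps C) (delta / real (card C))))"

text \<open>delta-mutual information I_delta(U;W), given the uncertainty function m on values of U,
  the range U0 = [U], the range W of W and the conditional ranges cond w = [U|w].\<close>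
definition delta_connected ::
  "('b set \<Rightarrow> real) \<Rightarrow> 'b set \<Rightarrow> 'w set \<Rightarrow> ('w \<Rightarrow> 'b set) \<Rightarrow> real \<Rightarrow> 'b \<Rightarrow> 'b \<Rightarrow> bool" where
  "delta_connected m U0 W cond delta u u' \<longleftrightarrow>
     (\<exists>ws. ws \<noteq> [] \<and> set ws \<subseteq> W \<and> u \<in> cond (hd ws) \<and> u' \<in> cond (last ws) \<and>
        (\<forall>i. 0 < i \<and> i < length ws \<longrightarrow>
           m (cond (ws ! i) \<inter> cond (ws ! (i - 1))) / m U0 > delta))"

definition delta_connected_set ::
  "('b set \<Rightarrow> real) \<Rightarrow> 'b set \<Rightarrow> 'w set \<Rightarrow> ('w \<Rightarrow> 'b set) \<Rightarrow> real \<Rightarrow> 'b set \<Rightarrow> bool" where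
  "delta_connected_set m U0 W cond delta S \<longleftrightarrow>
     (\<forall>u\<in>S. \<forall>u'\<in>S. delta_connected m U0 W cond delta u u')"

definition valid_overlap_family ::
  "('b set \<Rightarrow> real) \<Rightarrow> 'b set \<Rightarrow> 'w set \<Rightarrow> ('w \<Rightarrow> 'b set) \<Rightarrow> real \<Rightarrow> 'b set set \<Rightarrow> bool" where
  "valid_overlap_family m U0 W cond delta F \<longleftrightarrow>
     (\<forall>S\<in>F. S \<subseteq> U0) \<and> U0 \<subseteq> \<Union>F \<and>
     (\<forall>S\<in>F. delta_connected_set m U0 W cond delta S \<and> (\<exists>w\<in>W. cond w \<subseteq> S)) \<and>
     (\<forall>S1\<in>F. \<forall>S2\<in>F. S1 \<noteq> S2 \<longrightarrow> m (S1 \<inter> S2) \<le> delta * m U0) \<and>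
     (\<forall>w\<in>W. \<exists>S\<in>F. cond w \<subseteq> S)"

definition overlap_family ::
  "('b set \<Rightarrow> real) \<Rightarrow> 'b set \<Rightarrow> 'w set \<Rightarrow> ('w \<Rightarrow> 'b set) \<Rightarrow> real \<Rightarrow> 'b set set \<Rightarrow> bool" where
  "overlap_family m U0 W cond delta F \<longleftrightarrow>
     valid_overlap_family m U0 W cond delta F \<and> finite F \<and>
     (\<forall>G. valid_overlap_family m U0 W cond delta G \<longrightarrow> finite G \<and> card G \<le> card F)"

definition I_delta ::
  "('b set \<Rightarrow> real) \<Rightarrow> 'b set \<Rightarrow> 'w set \<Rightarrow> ('w \<Rightarrow> 'b set) \<Rightarrow> real \<Rightarrow> real" where
  "I_delta m U0 W cond delta =
     (if \<exists>F. overlap_family m U0 W cond delta F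
      then log 2 (real (card (SOME F. overlap_family m U0 W cond delta F)))
      else 0)"

end

theory Submission
  imports Defs
begin

lemma uf_mono: "uncertainty_function A m \<Longrightarrow> S \<subseteq> T \<Longrightarrow> T \<subseteq> A \<Longrightarrow> m S \<le> m T"
  unfolding uncertainty_function_def
  by (metis Un_absorb1 dual_order.trans max.cobounded1)

lemma uf_pos: "uncertainty_function A m \<Longrightarrow> S \<subseteq> A \<Longrightarrow> S \<noteq> {} \<Longrightarrow> 0 < m S"
  unfolding uncertainty_function_def by blast

lemma condY_eq: "x \<in> C \<Longrightarrow> condY Xs eps C x = S_eps Xs eps x"
  by (auto simp: condY_def outY_def S_eps_def)

lemma S_eps_sub: "S_eps Xs eps x \<subseteq> Xs"
  by (auto simp: S_eps_def)

lemma outY_sub: "outY Xs eps C \<subseteq> Xs"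
  by (auto simp: outY_def S_eps_def)

lemma self_in: "x \<in> Xs \<Longrightarrow> 0 \<le> eps \<Longrightarrow> x \<in> S_eps Xs eps x"
  by (auto simp: S_eps_def)

lemma validD:
  assumes "valid_overlap_family m U0 W cond delta F"
  shows "\<forall>S\<in>F. S \<subseteq> U0" "U0 \<subseteq> \<Union>F"
    "\<forall>S\<in>F. delta_connected_set m U0 W cond delta S"
    "\<forall>S\<in>F. \<exists>w\<in>W. cond w \<subseteq> S"
    "\<forall>S1\<in>F. \<forall>S2\<in>F. S1 \<noteq> S2 \<longrightarrow> m (S1 \<inter> S2) \<le> delta * m U0"
    "\<forall>w\<in>W. \<exists>S\<in>F. cond w \<subseteq> S"
  using assms unfolding valid_overlap_family_def by simp_all

lemma inj_lemma:
  assumes uf: "uncertainty_function Xs mY" and cb: "codebook Xs C"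
    and v: "valid_overlap_family mY (outY Xs eps C) C (condY Xs eps C) th G"
    and small: "\<forall>x\<in>C. th * mY (outY Xs eps C) < mY (S_eps Xs eps x)"
  shows "\<exists>f. inj_on f G \<and> f ` G \<subseteq> C \<and> (\<forall>S\<in>G. S_eps Xs eps (f S) \<subseteq> S)"
proof -
  have ex: "\<forall>S\<in>G. \<exists>w\<in>C. S_eps Xs eps w \<subseteq> S"
  proof
    fix S assume "S \<in> G"
    then obtain w where "w \<in> C" "condY Xs eps C w \<subseteq> S"
      using validD(4)[OF v] by blast
    then show "\<exists>w\<in>C. S_eps Xs eps w \<subseteq> S" using condY_eq[of w C Xs eps] by auto
  qed
  define f where "f S = (SOME w. w \<in> C \<and> S_eps Xs eps w \<subseteq> S)" for S
  have f: "f S \<in> C \<and> S_eps Xs eps (f S) \<subseteq> S" if "S \<in> G" for S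
  proof -
    have "\<exists>w\<in>C. S_eps Xs eps w \<subseteq> S" using ex that by (rule bspec)
    then obtain w where "w \<in> C" "S_eps Xs eps w \<subseteq> S" by (rule bexE)
    then show ?thesis unfolding f_def
      using someI[of "\<lambda>w. w \<in> C \<and> S_eps Xs eps w \<subseteq> S" w] by blast
  qed
  have "inj_on f G"
  proof (rule inj_onI, rule ccontr)
    fix S1 S2 assume a: "S1 \<in> G" "S2 \<in> G" "f S1 = f S2" "S1 \<noteq> S2"
    have v4: "\<forall>S1\<in>G. \<forall>S2\<in>G. S1 \<noteq> S2 \<longrightarrow> mY (S1 \<inter> S2) \<le> th * mY (outY Xs eps C)"
      and v1: "\<forall>S\<in>G. S \<subseteq> outY Xs eps C"
      using validD(5,1)[OF v] by simp_all
    have le: "mY (S1 \<inter> S2) \<le> th * mY (outY Xs eps C)"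
      using v4 a by blast
    have "S_eps Xs eps (f S1) \<subseteq> S1 \<inter> S2" using f a by (metis Int_greatest)
    moreover have "S1 \<inter> S2 \<subseteq> Xs" using v1 a outY_sub by blast
    ultimately have "mY (S_eps Xs eps (f S1)) \<le> mY (S1 \<inter> S2)"
      by (rule uf_mono[OF uf])
    moreover have "th * mY (outY Xs eps C) < mY (S_eps Xs eps (f S1))"
      using small f a(1) by blast
    ultimately show False using le by linarith
  qed
  then show ?thesis using f by blast
qed

lemma card_bound:
  assumes uf: "uncertainty_function Xs mY" and cb: "codebook Xs C"
    and v: "valid_overlap_family mY (outY Xs eps C) C (condY Xs eps C) th G"
    and small: "\<forall>x\<in>C. th * mY (outY Xs eps C) < mY (S_eps Xs eps x)"
  shows "finite G \<and> card G \<le> card C"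
proof -
  obtain f where f: "inj_on f G" "f ` G \<subseteq> C" using inj_lemma[OF assms] by blast
  have fC: "finite C" using cb unfolding codebook_def by blast
  have "finite (f ` G)" using f(2) fC by (rule finite_subset)
  then have "finite G" using f(1) by (rule finite_imageD)
  moreover have "card G \<le> card C" using card_inj_on_le[OF f fC] .
  ultimately show ?thesis by blast
qed

lemma outY_pos:
  assumes uf: "uncertainty_function Xs mY" and cb: "codebook Xs C" and e: "0 \<le> eps"
  shows "0 < mY (outY Xs eps C)"
proof -
  obtain x where x: "x \<in> C" using cb unfolding codebook_def by blast
  have xX: "x \<in> Xs" using cb x unfolding codebook_def by blast
  have "x \<in> outY Xs eps C" using x self_in[OF xX e] unfolding outY_def by blast
  then have "outY Xs eps C \<noteq> {}" by blast
  then show ?thesis using uf_pos[OF uf outY_sub] by blast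
qed

lemma div_card_le:
  fixes delta :: real
  assumes "0 \<le> delta" "finite C" "C \<noteq> {}"
  shows "delta / real (card C) \<le> delta"
proof -
  have "0 < card C" using assms(2,3) by (simp add: card_gt_0_iff)
  then have n1: "1 \<le> real (card C)" by linarith
  have "delta * 1 \<le> delta * real (card C)" using n1 assms(1) by (rule mult_left_mono)
  then show ?thesis using n1 by (simp add: divide_le_eq)
qed

lemma cap_nonneg:
  assumes "xstar \<in> Xs"
  shows "0 \<le> capacity mY Xs eps delta"
proof -
  have "distinguishable mY Xs eps delta {xstar}"
    using assms unfolding distinguishable_def codebook_def by simp
  then have "ereal (log 2 (real (card {xstar}))) \<in>
      {ereal (log 2 (real (card C))) | C. distinguishable mY Xs eps delta C}" by blast
  then have "ereal (log 2 (real (card {xstar}))) \<le> capacity mY Xs eps delta"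
    unfolding capacity_def by (rule Sup_upper)
  then show ?thesis by (simp add: zero_ereal_def)
qed

lemma I_le_cap:
  assumes uf: "uncertainty_function Xs mY" and m1: "mY Xs = 1" and d0: "0 \<le> delta"
    and V: "\<forall>x\<in>Xs. delta < mY (S_eps Xs eps x)" and e: "0 \<le> eps"
    and cb: "codebook Xs C" and dt0: "0 \<le> dt" and dtle: "dt \<le> delta / mY (outY Xs eps C)"
    and cap0: "0 \<le> capacity mY Xs eps delta"
  shows "ereal (I_delta mY (outY Xs eps C) C (condY Xs eps C) (dt / real (card C)))
           \<le> capacity mY Xs eps delta"
proof (cases "\<exists>F. overlap_family mY (outY Xs eps C) C (condY Xs eps C) (dt / real (card C)) F")
  case False
  then have "I_delta mY (outY Xs eps C) C (condY Xs eps C) (dt / real (card C)) = 0"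
    unfolding I_delta_def by (rule if_not_P)
  then show ?thesis using cap0 by (simp add: zero_ereal_def)
next
  case True
  define U where "U = outY Xs eps C"
  define th where "th = dt / real (card C)"
  have fC: "finite C" and neC: "C \<noteq> {}" and CX: "C \<subseteq> Xs" using cb unfolding codebook_def by auto
  have cpos: "0 < real (card C)" using fC neC by (simp add: card_gt_0_iff)
  have Upos: "0 < mY U" unfolding U_def using outY_pos[OF uf cb e] .
  have "dt * mY U \<le> delta" using dtle Upos unfolding U_def[symmetric] by (simp add: le_divide_eq)
  then have thU: "th * mY U \<le> delta / real (card C)"
    unfolding th_def using cpos by (simp add: divide_right_mono)
  have dC: "delta / real (card C) \<le> delta" using div_card_le[OF d0 fC neC] .
  have small: "\<forall>x\<in>C. th * mY U < mY (S_eps Xs eps x)"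
  proof
    fix x assume "x \<in> C"
    then have "delta < mY (S_eps Xs eps x)" using V CX by blast
    then show "th * mY U < mY (S_eps Xs eps x)" using thU dC by linarith
  qed
  define F where "F = (SOME F. overlap_family mY U C (condY Xs eps C) th F)"
  have oF: "overlap_family mY U C (condY Xs eps C) th F"
    unfolding F_def using True unfolding U_def th_def by (rule someI_ex)
  have vF: "valid_overlap_family mY U C (condY Xs eps C) th F" and finF: "finite F"
    using oF unfolding overlap_family_def by simp_all
  have Ieq: "I_delta mY U C (condY Xs eps C) th = log 2 (real (card F))"
    unfolding I_delta_def F_def using True unfolding U_def th_def by simp
  obtain f where f: "inj_on f F" "f ` F \<subseteq> C" "\<forall>S\<in>F. S_eps Xs eps (f S) \<subseteq> S"
    using inj_lemma[OF uf cb vF[unfolded U_def] small[unfolded U_def]] by blast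
  show ?thesis
  proof (cases "F = {}")
    case True
    then show ?thesis using cap0 Ieq unfolding U_def th_def by (simp add: zero_ereal_def log_def)
  next
    case False
    define C' where "C' = f ` F"
    have cardC': "card C' = card F" unfolding C'_def using f(1) by (rule card_image)
    have C'C: "C' \<subseteq> C" unfolding C'_def using f(2) .
    have finC': "finite C'" using C'C fC by (rule finite_subset)
    have neC': "C' \<noteq> {}" unfolding C'_def using False by simp
    have cC': "card C' \<le> card C" using fC C'C by (simp add: card_mono)
    have cC'pos: "0 < real (card C')" using finC' neC' by (simp add: card_gt_0_iff)
    have dd: "delta / real (card C) \<le> delta / real (card C')"
      using d0 cC'pos cC' by (simp add: divide_left_mono)
    have "distinguishable mY Xs eps delta C'"
      unfolding distinguishable_def
    proof (intro conjI ballI impI)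
      show "codebook Xs C'" unfolding codebook_def using C'C CX finC' neC' by blast
    next
      fix x1 x2 assume x: "x1 \<in> C'" "x2 \<in> C'" "x1 \<noteq> x2"
      obtain S1 where S1: "S1 \<in> F" "x1 = f S1" using x(1) unfolding C'_def by blast
      obtain S2 where S2: "S2 \<in> F" "x2 = f S2" using x(2) unfolding C'_def by blast
      have ne: "S1 \<noteq> S2" using S1 S2 x(3) by blast
      have "S_eps Xs eps x1 \<inter> S_eps Xs eps x2 \<subseteq> S1 \<inter> S2"
        using f(3) S1 S2 by blast
      moreover have "S1 \<inter> S2 \<subseteq> Xs" using validD(1)[OF vF] S1 outY_sub unfolding U_def by blast
      ultimately have "mY (S_eps Xs eps x1 \<inter> S_eps Xs eps x2) \<le> mY (S1 \<inter> S2)"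
        by (rule uf_mono[OF uf])
      moreover have "mY (S1 \<inter> S2) \<le> th * mY U" using validD(5)[OF vF] S1 S2 ne by blast
      ultimately show "mY (S_eps Xs eps x1 \<inter> S_eps Xs eps x2) / mY Xs \<le> delta / real (card C')"
        using thU dd m1 by simp
    qed
    then have "ereal (log 2 (real (card C'))) \<le> capacity mY Xs eps delta"
      unfolding capacity_def by (intro Sup_upper) blast
    then show ?thesis using Ieq cardC' unfolding U_def th_def by simp
  qed
qed

lemma dist_feasible:
  assumes ufX: "uncertainty_function Xs mX" and uf: "uncertainty_function Xs mY"
    and m1: "mY Xs = 1" and d0: "0 \<le> delta" and e: "0 \<le> eps"
    and dC: "distinguishable mY Xs eps delta C"
  shows "feasible mX mY Xs eps (delta / mY (outY Xs eps C)) C"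
proof -
  have cb: "codebook Xs C" using dC unfolding distinguishable_def by blast
  have fC: "finite C" and neC: "C \<noteq> {}" and CX: "C \<subseteq> Xs" using cb unfolding codebook_def by auto
  have cpos: "0 < real (card C)" using fC neC by (simp add: card_gt_0_iff)
  have Upos: "0 < mY (outY Xs eps C)" using outY_pos[OF uf cb e] .
  have mXC: "0 < mX C" using uf_pos[OF ufX CX neC] .
  have A: "preceq_set (assocXY mX Xs eps C) 1"
    unfolding preceq_set_def
  proof
    fix a assume "a \<in> assocXY mX Xs eps C"
    then obtain y1 y2 where a: "a = mX (condX eps C y1 \<inter> condX eps C y2) / mX C"
      unfolding assocXY_def by blast
    have "condX eps C y1 \<inter> condX eps C y2 \<subseteq> C" unfolding condX_def by blast
    then have "mX (condX eps C y1 \<inter> condX eps C y2) \<le> mX C" using CX by (rule uf_mono[OF ufX])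
    then show "a \<le> 1" unfolding a using mXC by simp
  qed
  have B: "preceq_set (assocYX mY Xs eps C) (delta / mY (outY Xs eps C) / real (card C))"
    unfolding preceq_set_def
  proof
    fix a assume "a \<in> assocYX mY Xs eps C"
    then obtain x1 x2 where a: "a = mY (condY Xs eps C x1 \<inter> condY Xs eps C x2) / mY (outY Xs eps C)"
      and x: "x1 \<in> C" "x2 \<in> C" "x1 \<noteq> x2"
      unfolding assocYX_def by blast
    have "mY (S_eps Xs eps x1 \<inter> S_eps Xs eps x2) / mY Xs \<le> delta / real (card C)"
      using dC x unfolding distinguishable_def by blast
    then have le: "mY (S_eps Xs eps x1 \<inter> S_eps Xs eps x2) \<le> delta / real (card C)" using m1 by simp
    have "a = mY (S_eps Xs eps x1 \<inter> S_eps Xs eps x2) / mY (outY Xs eps C)"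
      unfolding a using condY_eq[OF x(1)] condY_eq[OF x(2)] by simp
    also have "\<dots> \<le> (delta / real (card C)) / mY (outY Xs eps C)"
      using le Upos by (rule divide_right_mono[OF _ less_imp_le])
    also have "\<dots> = delta / mY (outY Xs eps C) / real (card C)" by (simp add: divide_divide_eq_left mult.commute)
    finally show "a \<le> delta / mY (outY Xs eps C) / real (card C)" .
  qed
  show ?thesis unfolding feasible_def using cb A B by blast
qed

lemma dist_I:
  assumes uf: "uncertainty_function Xs mY"
    and m1: "mY Xs = 1" and d0: "0 \<le> delta" and e: "0 \<le> eps"
    and V: "\<forall>x\<in>Xs. delta < mY (S_eps Xs eps x)"
    and dC: "distinguishable mY Xs eps delta C"
  shows "I_delta mY (outY Xs eps C) C (condY Xs eps C) (delta / mY (outY Xs eps C) / real (card C))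
         = log 2 (real (card C))"
proof -
  define U where "U = outY Xs eps C"
  define th where "th = delta / mY U / real (card C)"
  have cb: "codebook Xs C" using dC unfolding distinguishable_def by blast
  have fC: "finite C" and neC: "C \<noteq> {}" and CX: "C \<subseteq> Xs" using cb unfolding codebook_def by auto
  have cpos: "0 < real (card C)" using fC neC by (simp add: card_gt_0_iff)
  have Upos: "0 < mY U" unfolding U_def using outY_pos[OF uf cb e] .
  have thU: "th * mY U = delta / real (card C)" unfolding th_def using Upos by simp
  have dCd: "delta / real (card C) \<le> delta" using div_card_le[OF d0 fC neC] .
  have small: "\<forall>x\<in>C. th * mY U < mY (S_eps Xs eps x)"
  proof
    fix x assume "x \<in> C"
    then have "delta < mY (S_eps Xs eps x)" using V CX by blast
    then show "th * mY U < mY (S_eps Xs eps x)" using thU dCd by linarith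
  qed
  have pair: "mY (S_eps Xs eps x1 \<inter> S_eps Xs eps x2) \<le> delta / real (card C)"
    if "x1 \<in> C" "x2 \<in> C" "x1 \<noteq> x2" for x1 x2
  proof -
    have "mY (S_eps Xs eps x1 \<inter> S_eps Xs eps x2) / mY Xs \<le> delta / real (card C)"
      using dC that unfolding distinguishable_def by blast
    then show ?thesis using m1 by simp
  qed
  define F0 where "F0 = S_eps Xs eps ` C"
  have inj: "inj_on (S_eps Xs eps) C"
  proof (rule inj_onI, rule ccontr)
    fix x1 x2 assume x: "x1 \<in> C" "x2 \<in> C" "S_eps Xs eps x1 = S_eps Xs eps x2" "x1 \<noteq> x2"
    have "mY (S_eps Xs eps x1 \<inter> S_eps Xs eps x2) \<le> delta / real (card C)" using pair x by blast
    then have "mY (S_eps Xs eps x1) \<le> delta" using x(3) dCd by simp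
    moreover have "delta < mY (S_eps Xs eps x1)" using V CX x(1) by blast
    ultimately show False by linarith
  qed
  have cardF0: "card F0 = card C" unfolding F0_def using inj by (rule card_image)
  have vF0: "valid_overlap_family mY U C (condY Xs eps C) th F0"
    unfolding valid_overlap_family_def
  proof (intro conjI ballI impI)
    fix S assume "S \<in> F0"
    then show "S \<subseteq> U" unfolding F0_def U_def outY_def by blast
  next
    show "U \<subseteq> \<Union> F0" unfolding F0_def U_def outY_def by blast
  next
    fix S assume "S \<in> F0"
    then obtain x where x: "x \<in> C" "S = S_eps Xs eps x" unfolding F0_def by blast
    show "delta_connected_set mY U C (condY Xs eps C) th S"
      unfolding delta_connected_set_def
    proof (intro ballI)
      fix u u' assume "u \<in> S" "u' \<in> S"
      then show "delta_connected mY U C (condY Xs eps C) th u u'"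
        unfolding delta_connected_def using x condY_eq[OF x(1)]
        by (intro exI[of _ "[x]"]) auto
    qed
  next
    fix S assume "S \<in> F0"
    then obtain x where x: "x \<in> C" "S = S_eps Xs eps x" unfolding F0_def by blast
    then show "\<exists>w\<in>C. condY Xs eps C w \<subseteq> S" using condY_eq[OF x(1)] by blast
  next
    fix S1 S2 assume S: "S1 \<in> F0" "S2 \<in> F0" "S1 \<noteq> S2"
    then obtain x1 x2 where "x1 \<in> C" "x2 \<in> C" "S1 = S_eps Xs eps x1" "S2 = S_eps Xs eps x2"
      unfolding F0_def by blast
    moreover then have "x1 \<noteq> x2" using S(3) by blast
    ultimately have "mY (S1 \<inter> S2) \<le> delta / real (card C)" using pair by blast
    then show "mY (S1 \<inter> S2) \<le> th * mY U" using thU by simp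
  next
    fix w assume "w \<in> C"
    then show "\<exists>S\<in>F0. condY Xs eps C w \<subseteq> S" unfolding F0_def using condY_eq[of w C Xs eps] by blast
  qed
  have oF0: "overlap_family mY U C (condY Xs eps C) th F0"
    unfolding overlap_family_def
  proof (intro conjI allI impI)
    show "valid_overlap_family mY U C (condY Xs eps C) th F0" using vF0 .
    show "finite F0" unfolding F0_def using fC by simp
  next
    fix G assume "valid_overlap_family mY U C (condY Xs eps C) th G"
    then have "finite G \<and> card G \<le> card C"
      using card_bound[OF uf cb _ small[unfolded U_def]] unfolding U_def by blast
    then show "finite G" "card G \<le> card F0" using cardF0 by simp_all
  qed
  then have ex: "\<exists>F. overlap_family mY U C (condY Xs eps C) th F" by blast
  define F1 where "F1 = (SOME F. overlap_family mY U C (condY Xs eps C) th F)"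
  have oF1: "overlap_family mY U C (condY Xs eps C) th F1"
    unfolding F1_def using ex by (rule someI_ex)
  have "card F1 \<le> card F0" using oF0 oF1 unfolding overlap_family_def by blast
  moreover have "card F0 \<le> card F1" using oF0 oF1 unfolding overlap_family_def by blast
  ultimately have "card F1 = card C" using cardF0 by simp
  then have "I_delta mY U C (condY Xs eps C) th = log 2 (real (card C))"
    unfolding I_delta_def using ex F1_def by simp
  then show ?thesis unfolding U_def th_def .
qed

theorem theorem4:
  fixes Xs :: "'a::real_normed_vector set"
    and mX mY :: "'a set \<Rightarrow> real"
    and eps delta :: real
    and xstar :: 'a
  assumes "totally_bounded Xs"
    and "\<forall>x\<in>Xs. norm x \<le> 1"
    and "uncertainty_function Xs mX"
    and "uncertainty_function Xs mY"
    and "mY Xs = 1"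
    and "0 < eps" and "eps \<le> 1"
    and "xstar \<in> Xs"
    and "\<forall>x\<in>Xs. mY (S_eps Xs eps xstar) \<le> mY (S_eps Xs eps x)"
    and "0 \<le> delta" and "delta < mY (S_eps Xs eps xstar)"
  shows "capacity mY Xs eps delta =
    Sup {ereal (I_delta mY (outY Xs eps C) C (condY Xs eps C) (dt / real (card C))) | dt C.
           0 \<le> dt \<and> feasible mX mY Xs eps dt C \<and> dt \<le> delta / mY (outY Xs eps C)}"
proof -
  have V: "\<forall>x\<in>Xs. delta < mY (S_eps Xs eps x)" using assms(9,11) by force
  have e: "0 \<le> eps" using assms(6) by simp
  have cap0: "0 \<le> capacity mY Xs eps delta" using cap_nonneg[OF assms(8)] .
  let ?R = "{ereal (I_delta mY (outY Xs eps C) C (condY Xs eps C) (dt / real (card C))) | dt C.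
           0 \<le> dt \<and> feasible mX mY Xs eps dt C \<and> dt \<le> delta / mY (outY Xs eps C)}"
  show ?thesis
  proof (rule antisym)
    show "capacity mY Xs eps delta \<le> Sup ?R"
      unfolding capacity_def
    proof (rule Sup_least)
      fix z assume "z \<in> {ereal (log 2 (real (card C))) | C. distinguishable mY Xs eps delta C}"
      then obtain C where z: "z = ereal (log 2 (real (card C)))" and dC: "distinguishable mY Xs eps delta C"
        by blast
      have cb: "codebook Xs C" using dC unfolding distinguishable_def by blast
      have Upos: "0 < mY (outY Xs eps C)" using outY_pos[OF assms(4) cb e] .
      define dt where "dt = delta / mY (outY Xs eps C)"
      have dt0: "0 \<le> dt" unfolding dt_def using assms(10) Upos by simp
      have fe: "feasible mX mY Xs eps dt C"
        unfolding dt_def using dist_feasible[OF assms(3,4,5,10) e dC] .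
      have Ieq: "I_delta mY (outY Xs eps C) C (condY Xs eps C) (dt / real (card C)) = log 2 (real (card C))"
        unfolding dt_def using dist_I[OF assms(4,5,10) e V dC] .
      have "z \<in> ?R" unfolding z using dt0 fe Ieq[symmetric] dt_def by blast
      then show "z \<le> Sup ?R" by (rule Sup_upper)
    qed
  next
    show "Sup ?R \<le> capacity mY Xs eps delta"
    proof (rule Sup_least)
      fix z assume "z \<in> ?R"
      then obtain dt C where z: "z = ereal (I_delta mY (outY Xs eps C) C (condY Xs eps C) (dt / real (card C)))"
        and dt0: "0 \<le> dt" and fe: "feasible mX mY Xs eps dt C" and dtle: "dt \<le> delta / mY (outY Xs eps C)"
        by blast
      have cb: "codebook Xs C" using fe unfolding feasible_def by blast
      show "z \<le> capacity mY Xs eps delta"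
        unfolding z using I_le_cap[OF assms(4,5,10) V e cb dt0 dtle cap0] .
    qed
  qed
qed

end
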